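(* Let $D>0$, let $(L,\mathbf N)$ be an architecture with $N_0=d$, let $q\in[1,\infty]$, $r\ge1$, $\eta>0$, and let $Q_\eta:\Theta_{L,\mathbf N}\to\Theta_{L,\mathbf N}$ act coordinatewise by $Q_\eta(x)=\lfloor x/\eta\rfloor\eta$. Let $N_{\min}=\min_{0\le\ell\le L}N_\ell$ and $c':=DN_{\min}^{1/q}$. If $\varepsilon>0$ is such that $$\max_{\theta\in\Theta^q_{L,\mathbf N}(r)}\ \max_{x\in[-D,D]^d}\|R_\theta(x)-R_{Q_\eta(\theta)}(x)\|_q\le\varepsilon,$$ then $\min(r,\eta)\le\frac{\varepsilon}{c'r^{L-1}}$. In particular, if moreover $\varepsilon<c'r^L$, then $\eta\le\frac{\varepsilon}{c'r^{L-1}}$.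
   Context: ReLU $\rho(x)=\max(0,x)$ coordinatewise. Architecture $(L,\mathbf N)$, $\mathbf N=(N_0,\dots,N_L)$; parameters $\theta=(W_1,\dots,W_L,b_1,\dots,b_L)$, $W_\ell\in\mathbb R^{N_\ell\times N_{\ell-1}}$, $b_\ell\in\mathbb R^{N_\ell}$, forming $\Theta_{L,\mathbf N}$. Realization: $R_\theta(x)=W_Ly_{L-1}(x)+b_L$, $y_0=x$, $y_\ell=\rho(W_\ell y_{\ell-1}+b_\ell)$, $1\le\ell\le L-1$. $\|M\|_{q\to q}$ is the operator norm induced by $\|\cdot\|_q$. $\Theta^q_{L,\mathbf N}(r)=\{\theta:\|W_\ell\|_{q\to q}\le r,\ \|b_\ell\|_q\le r\ \forall\ell\}$. $\lfloor x\rfloor=\max\{n\in\mathbb Z:n\le x\}$; $N^{1/\infty}:=1$. *)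

theory Defs
  imports "HOL-Analysis.Analysis"
begin

text \<open>Vectors in R^n are functions nat => real, only indices i < n matter.
  Matrices in R^(m x n) are functions nat => nat => real, only i < m, j < n matter.\<close>

definition qnorm :: "ereal \<Rightarrow> nat \<Rightarrow> (nat \<Rightarrow> real) \<Rightarrow> real" where
  "qnorm q n x =
     (if q = \<infinity> then Max ({\<bar>x i\<bar> | i. i < n} \<union> {0})
      else (\<Sum>i<n. \<bar>x i\<bar> powr real_of_ereal q) powr (1 / real_of_ereal q))"

definition matvec :: "nat \<Rightarrow> (nat \<Rightarrow> nat \<Rightarrow> real) \<Rightarrow> (nat \<Rightarrow> real) \<Rightarrow> (nat \<Rightarrow> real)" where
  "matvec n M x = (\<lambda>i. \<Sum>j<n. M i j * x j)"

definition opnorm :: "ereal \<Rightarrow> nat \<Rightarrow> nat \<Rightarrow> (nat \<Rightarrow> nat \<Rightarrow> real) \<Rightarrow> real" where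
  "opnorm q m n M = Sup {qnorm q m (matvec n M x) | x. qnorm q n x \<le> 1}"

text \<open>Parameters: W l (l = 1..L) is an N l x N (l-1) matrix, b l is in R^(N l).\<close>

fun hidden :: "(nat \<Rightarrow> nat) \<Rightarrow> (nat \<Rightarrow> nat \<Rightarrow> nat \<Rightarrow> real) \<Rightarrow> (nat \<Rightarrow> nat \<Rightarrow> real)
     \<Rightarrow> nat \<Rightarrow> (nat \<Rightarrow> real) \<Rightarrow> (nat \<Rightarrow> real)" where
  "hidden N W b 0 x = x"
| "hidden N W b (Suc l) x =
     (\<lambda>i. max 0 (matvec (N l) (W (Suc l)) (hidden N W b l x) i + b (Suc l) i))"

definition realization :: "nat \<Rightarrow> (nat \<Rightarrow> nat) \<Rightarrow> (nat \<Rightarrow> nat \<Rightarrow> nat \<Rightarrow> real) \<Rightarrow> (nat \<Rightarrow> nat \<Rightarrow> real)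
     \<Rightarrow> (nat \<Rightarrow> real) \<Rightarrow> (nat \<Rightarrow> real)" where
  "realization L N W b x =
     (\<lambda>i. matvec (N (L - 1)) (W L) (hidden N W b (L - 1) x) i + b L i)"

definition param_ball :: "ereal \<Rightarrow> nat \<Rightarrow> (nat \<Rightarrow> nat) \<Rightarrow> real
     \<Rightarrow> (nat \<Rightarrow> nat \<Rightarrow> nat \<Rightarrow> real) \<Rightarrow> (nat \<Rightarrow> nat \<Rightarrow> real) \<Rightarrow> bool" where
  "param_ball q L N r W b \<longleftrightarrow>
     (\<forall>l\<in>{1..L}. opnorm q (N l) (N (l - 1)) (W l) \<le> r \<and> qnorm q (N l) (b l) \<le> r)"

definition quant :: "real \<Rightarrow> real \<Rightarrow> real" where
  "quant \<eta> x = real_of_int \<lfloor>x / \<eta>\<rfloor> * \<eta>"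

definition root_q :: "real \<Rightarrow> ereal \<Rightarrow> real" where
  "root_q N q = (if q = \<infinity> then 1 else N powr (1 / real_of_ereal q))"

end

theory Submission imports Defs begin

lemma matvec_diag:
  assumes "m \<le> n" "\<And>i j. M i j = (if i = j \<and> i < m then c else 0)"
  shows "matvec n M h i = (if i < m then c * h i else 0)"
proof (cases "i < m")
  case True
  have "matvec n M h i = (\<Sum>j<n. if j = i then c * h j else 0)"
    unfolding matvec_def using assms(2) True by (intro sum.cong) auto
  also have "\<dots> = c * h i" using True assms(1) by (simp add: sum.delta')
  finally show ?thesis using True by simp
next
  case False
  then have "\<And>j. M i j = 0" using assms(2) by simp
  then show ?thesis unfolding matvec_def using False by simp
qed

lemma qnorm_restrict:
  assumes q: "1 \<le> q" and "m \<le> n" "m \<le> n'" "0 \<le> c"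
  shows "qnorm q n (\<lambda>i. if i < m then c * x i else 0) \<le> c * qnorm q n' x"
proof (cases "q = \<infinity>")
  case True
  have fin: "finite ({\<bar>x i\<bar> | i. i < n'} \<union> {0})" by simp
  have "Max ({\<bar>(if i < m then c * x i else 0)\<bar> | i. i < n} \<union> {0}) \<le> c * Max ({\<bar>x i\<bar> | i. i < n'} \<union> {0})"
  proof (subst Max_le_iff, simp, simp, intro ballI)
    fix y assume "y \<in> {\<bar>(if i < m then c * x i else 0)\<bar> | i. i < n} \<union> {0}"
    then obtain i where y: "y = 0 \<or> (i < n \<and> y = \<bar>(if i < m then c * x i else 0)\<bar>)" by auto
    have M0: "0 \<le> Max ({\<bar>x i\<bar> | i. i < n'} \<union> {0})" using fin by (intro Max_ge) auto
    show "y \<le> c * Max ({\<bar>x i\<bar> | i. i < n'} \<union> {0})"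
    proof (cases "y = 0")
      case True then show ?thesis using M0 assms by simp
    next
      case False
      then have i: "i < n" "y = \<bar>(if i < m then c * x i else 0)\<bar>" using y by auto
      show ?thesis
      proof (cases "i < m")
        case True
        have "\<bar>x i\<bar> \<le> Max ({\<bar>x i\<bar> | i. i < n'} \<union> {0})"
          using fin True assms by (intro Max_ge) auto
        then show ?thesis using i True assms by (simp add: abs_mult mult_left_mono)
      next
        case False then show ?thesis using i M0 assms by simp
      qed
    qed
  qed
  then show ?thesis using True unfolding qnorm_def by simp
next
  case False
  then obtain p where qp: "q = ereal p" using q by (cases q) auto
  have p: "p \<ge> 1" using q qp by simp
  have "(\<Sum>i<n. \<bar>(if i < m then c * x i else 0)\<bar> powr p) = (\<Sum>i<m. c powr p * \<bar>x i\<bar> powr p)"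
  proof -
    have "(\<Sum>i<n. \<bar>(if i < m then c * x i else 0)\<bar> powr p) = (\<Sum>i<n. if i < m then c powr p * \<bar>x i\<bar> powr p else 0)"
      using assms by (intro sum.cong) (auto simp: abs_mult powr_mult)
    also have "\<dots> = (\<Sum>i\<in>{..<n} \<inter> {i. i < m}. c powr p * \<bar>x i\<bar> powr p)"
      by (subst sum.inter_restrict) auto
    also have "{..<n} \<inter> {i. i < m} = {..<m}" using assms by auto
    finally show ?thesis .
  qed
  also have "\<dots> = c powr p * (\<Sum>i<m. \<bar>x i\<bar> powr p)" by (simp add: sum_distrib_left)
  also have "\<dots> \<le> c powr p * (\<Sum>i<n'. \<bar>x i\<bar> powr p)"
    using assms by (intro mult_left_mono sum_mono2) auto
  finally have le: "(\<Sum>i<n. \<bar>(if i < m then c * x i else 0)\<bar> powr p) \<le> c powr p * (\<Sum>i<n'. \<bar>x i\<bar> powr p)" .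
  have "(\<Sum>i<n. \<bar>(if i < m then c * x i else 0)\<bar> powr p) powr (1/p) \<le> (c powr p * (\<Sum>i<n'. \<bar>x i\<bar> powr p)) powr (1/p)"
    using le p by (intro powr_mono2) (auto intro: sum_nonneg)
  also have "\<dots> = c * (\<Sum>i<n'. \<bar>x i\<bar> powr p) powr (1/p)"
    using p assms by (simp add: powr_mult powr_powr sum_nonneg)
  finally show ?thesis using qp unfolding qnorm_def by simp
qed

lemma qnorm_const:
  assumes q: "1 \<le> q" and "m \<le> n" "1 \<le> m" "0 \<le> v"
  shows "qnorm q n (\<lambda>i. if i < m then v else 0) = v * root_q (real m) q"
proof (cases "q = \<infinity>")
  case True
  have "Max ({\<bar>(if i < m then v else 0)\<bar> | i. i < n} \<union> {0}) = v"
  proof (rule Max_eqI)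
    show "finite ({\<bar>(if i < m then v else 0)\<bar> | i. i < n} \<union> {0})" by simp
    show "y \<le> v" if "y \<in> {\<bar>(if i < m then v else 0)\<bar> | i. i < n} \<union> {0}" for y
      using that assms by auto
    show "v \<in> {\<bar>(if i < m then v else 0)\<bar> | i. i < n} \<union> {0}"
      using assms by (auto intro!: exI[of _ 0])
  qed
  then show ?thesis using True unfolding qnorm_def root_q_def by simp
next
  case False
  then obtain p where qp: "q = ereal p" using q by (cases q) auto
  have p: "p \<ge> 1" using q qp by simp
  have "(\<Sum>i<n. \<bar>(if i < m then v else 0)\<bar> powr p) = (\<Sum>i<n. if i < m then v powr p else 0)"
    using assms by (intro sum.cong) auto
  also have "\<dots> = (\<Sum>i\<in>{..<n} \<inter> {i. i < m}. v powr p)"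
    by (subst sum.inter_restrict) auto
  also have "{..<n} \<inter> {i. i < m} = {..<m}" using assms by auto
  finally have s: "(\<Sum>i<n. \<bar>(if i < m then v else 0)\<bar> powr p) = real m * v powr p" by simp
  have "(real m * v powr p) powr (1/p) = real m powr (1/p) * v"
    using p assms by (simp add: powr_mult powr_powr)
  then show ?thesis using s qp unfolding qnorm_def root_q_def by simp
qed

lemma qnorm_zero: "qnorm q n (\<lambda>i. 0) = 0"
proof -
  have "{\<bar>0::real\<bar> | i. i < n} \<union> {0} \<subseteq> {0}" by auto
  then have "{\<bar>0::real\<bar> | i. i < n} \<union> {0} = {0}" by auto
  then show ?thesis unfolding qnorm_def by (simp del: Un_insert_right)
qed

lemma opnorm_diag:
  assumes q: "1 \<le> q" and "m \<le> nr" "m \<le> nc" "0 \<le> c" "c \<le> r"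
    and M: "\<And>i j. M i j = (if i = j \<and> i < m then c else 0)"
  shows "opnorm q nr nc M \<le> r"
  unfolding opnorm_def
proof (rule cSup_least)
  show "{qnorm q nr (matvec nc M x) |x. qnorm q nc x \<le> 1} \<noteq> {}"
    using qnorm_zero[of q nc] by (intro notI) (metis (mono_tags, lifting) empty_Collect_eq order.refl zero_le_one)
  fix y assume "y \<in> {qnorm q nr (matvec nc M x) |x. qnorm q nc x \<le> 1}"
  then obtain x where y: "y = qnorm q nr (matvec nc M x)" and x: "qnorm q nc x \<le> 1" by auto
  have "matvec nc M x = (\<lambda>i. if i < m then c * x i else 0)"
    using matvec_diag[OF assms(3) M] by auto
  then have "y = qnorm q nr (\<lambda>i. if i < m then c * x i else 0)" using y by simp
  also have "\<dots> \<le> c * qnorm q nc x" using qnorm_restrict assms by blast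
  also have "\<dots> \<le> c" using x assms by (simp add: mult_left_le)
  finally show "y \<le> r" using assms by simp
qed

lemma quant_small: "0 \<le> a \<Longrightarrow> a < \<eta> \<Longrightarrow> quant \<eta> a = 0"
  unfolding quant_def by (simp add: floor_eq_iff)

lemma quant_zero: "quant \<eta> 0 = 0"
  unfolding quant_def by simp

lemma key:
  fixes D r \<eta> \<epsilon> a :: real and q :: ereal and L :: nat and N :: "nat \<Rightarrow> nat"
  assumes "D > 0" and "L \<ge> 1" and "1 \<le> m" and mle: "\<forall>l\<le>L. m \<le> N l"
    and q: "1 \<le> q" and "r \<ge> 1" and "\<eta> > 0" and a: "0 \<le> a" "a < \<eta>" "a \<le> r"
    and hyp: "\<forall>W b x. param_ball q L N r W b \<longrightarrow> (\<forall>i<N 0. \<bar>x i\<bar> \<le> D) \<longrightarrow>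
       qnorm q (N L) (\<lambda>i. realization L N W b x i
          - realization L N (\<lambda>l i j. quant \<eta> (W l i j)) (\<lambda>l i. quant \<eta> (b l i)) x i) \<le> \<epsilon>"
  shows "a * r ^ (L - 1) * D * root_q (real m) q \<le> \<epsilon>"
proof -
  define W :: "nat \<Rightarrow> nat \<Rightarrow> nat \<Rightarrow> real" where
    "W = (\<lambda>l i j. if i = j \<and> i < m then (if l = 1 then a else r) else 0)"
  define b :: "nat \<Rightarrow> nat \<Rightarrow> real" where "b = (\<lambda>l i. 0)"
  define x :: "nat \<Rightarrow> real" where "x = (\<lambda>i. D)"
  have pb: "param_ball q L N r W b"
    unfolding param_ball_def
  proof (intro ballI conjI)
    fix l assume l: "l \<in> {1..L}"
    show "opnorm q (N l) (N (l - 1)) (W l) \<le> r"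
      by (rule opnorm_diag[OF q, of m _ _ "if l = 1 then a else r"])
         (use l mle a \<open>r \<ge> 1\<close> in \<open>auto simp: W_def\<close>)
    show "qnorm q (N l) (b l) \<le> r" using qnorm_zero[of q "N l"] \<open>r \<ge> 1\<close> by (simp add: b_def)
  qed
  have xb: "\<forall>i<N 0. \<bar>x i\<bar> \<le> D" using \<open>D > 0\<close> by (simp add: x_def)
  have hid: "i < m \<Longrightarrow> hidden N W b l x i = (if l = 0 then D else a * r^(l-1) * D)" if "l < L" for l i
    using that
  proof (induction l arbitrary: i)
    case 0 then show ?case by (simp add: x_def)
  next
    case (Suc l)
    have mv: "matvec (N l) (W (Suc l)) (hidden N W b l x) i
        = (if i < m then (if Suc l = 1 then a else r) * hidden N W b l x i else 0)"
      by (rule matvec_diag) (use Suc.prems mle in \<open>auto simp: W_def\<close>)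
    have "hidden N W b (Suc l) x i = max 0 (matvec (N l) (W (Suc l)) (hidden N W b l x) i)"
      by (simp add: b_def)
    also have "\<dots> = a * r^l * D"
      using Suc a \<open>D > 0\<close> \<open>r \<ge> 1\<close> mv
      by (cases l) (auto simp: mult.assoc mult.left_commute)
    finally show ?case by simp
  qed
  define QW where "QW = (\<lambda>l i j. quant \<eta> (W l i j))"
  define Qb where "Qb = (\<lambda>l i. quant \<eta> (b l i))"
  have QW1: "QW 1 i j = 0" for i j
    using a by (simp add: QW_def W_def quant_small quant_zero)
  have Qb0: "Qb l i = 0" for l i by (simp add: Qb_def b_def quant_zero)
  have qh: "hidden N QW Qb l x = (\<lambda>i. 0)" if "l \<ge> 1" for l
    using that
  proof (induction l)
    case 0 then show ?case by simp
  next
    case (Suc l)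
    show ?case
    proof (cases "l = 0")
      case True then show ?thesis using QW1 by (simp add: matvec_def Qb0)
    next
      case False then show ?thesis using Suc by (simp add: matvec_def Qb0)
    qed
  qed
  have qr: "realization L N QW Qb x i = 0" for i
  proof (cases "L = 1")
    case True then show ?thesis using QW1 by (simp add: realization_def matvec_def Qb0)
  next
    case False then show ?thesis using \<open>L \<ge> 1\<close> qh[of "L - 1"]
      by (simp add: realization_def matvec_def Qb0)
  qed
  have orr: "realization L N W b x i = (if i < m then a * r ^ (L - 1) * D else 0)" for i
  proof -
    have mv: "matvec (N (L - 1)) (W L) (hidden N W b (L - 1) x) i
        = (if i < m then (if L = 1 then a else r) * hidden N W b (L - 1) x i else 0)"
      by (rule matvec_diag) (use mle in \<open>auto simp: W_def\<close>)
    show ?thesis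
    proof (cases "i < m")
      case True
      have h: "hidden N W b (L - 1) x i = (if L - 1 = 0 then D else a * r^(L-1-1) * D)"
        using hid[of "L - 1" i] True \<open>L \<ge> 1\<close> by simp
      show ?thesis
      proof (cases "L = 1")
        case True then show ?thesis using mv h \<open>i < m\<close> by (simp add: realization_def b_def)
      next
        case False
        then obtain k where k: "L = Suc (Suc k)" using \<open>L \<ge> 1\<close>
          by (metis One_nat_def Suc_le_D not0_implies_Suc)
        then show ?thesis using mv h \<open>i < m\<close> by (simp add: realization_def b_def)
      qed
    next
      case False then show ?thesis using mv by (simp add: realization_def b_def)
    qed
  qed
  have "qnorm q (N L) (\<lambda>i. realization L N W b x i - realization L N QW Qb x i) \<le> \<epsilon>"
    using hyp pb xb unfolding QW_def Qb_def by blast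
  moreover have "(\<lambda>i. realization L N W b x i - realization L N QW Qb x i)
      = (\<lambda>i. if i < m then a * r ^ (L - 1) * D else 0)"
    using orr qr by auto
  moreover have "qnorm q (N L) (\<lambda>i. if i < m then a * r ^ (L - 1) * D else 0)
      = a * r ^ (L - 1) * D * root_q (real m) q"
    by (rule qnorm_const) (use q mle \<open>1 \<le> m\<close> a \<open>D > 0\<close> \<open>r \<ge> 1\<close> in auto)
  ultimately show ?thesis by simp
qed

theorem mainTheorem6:
  fixes D r \<eta> \<epsilon> :: real and q :: ereal and L :: nat and N :: "nat \<Rightarrow> nat"
  assumes "D > 0" and "L \<ge> 1" and "\<forall>l\<le>L. N l \<ge> 1"
    and "1 \<le> q" and "r \<ge> 1" and "\<eta> > 0" and "\<epsilon> > 0"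
    and hyp: "\<forall>W b x. param_ball q L N r W b \<longrightarrow> (\<forall>i<N 0. \<bar>x i\<bar> \<le> D) \<longrightarrow>
       qnorm q (N L) (\<lambda>i. realization L N W b x i
          - realization L N (\<lambda>l i j. quant \<eta> (W l i j)) (\<lambda>l i. quant \<eta> (b l i)) x i) \<le> \<epsilon>"
  shows "min r \<eta> \<le> \<epsilon> / (D * root_q (real (Min (N ` {0..L}))) q * r ^ (L - 1))
    \<and> (\<epsilon> < D * root_q (real (Min (N ` {0..L}))) q * r ^ L \<longrightarrow>
         \<eta> \<le> \<epsilon> / (D * root_q (real (Min (N ` {0..L}))) q * r ^ (L - 1)))"
proof -
  define m where "m = Min (N ` {0..L})"
  have mle: "\<forall>l\<le>L. m \<le> N l" unfolding m_def by (intro allI impI Min_le) auto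
  have m1: "1 \<le> m" unfolding m_def using assms(3) by (subst Min_ge_iff) auto
  have rq: "root_q (real m) q > 0" using m1 unfolding root_q_def by auto
  define K where "K = D * root_q (real m) q * r ^ (L - 1)"
  have K: "K > 0" unfolding K_def using rq assms by auto
  have ak: "a \<le> \<epsilon> / K" if "0 \<le> a" "a < \<eta>" "a \<le> r" for a
  proof -
    have "a * r ^ (L - 1) * D * root_q (real m) q \<le> \<epsilon>"
      by (rule key[OF assms(1,2) m1 mle assms(4,5,6) that hyp])
    then have "a * K \<le> \<epsilon>" unfolding K_def by (simp add: ac_simps)
    then show ?thesis using K by (simp add: field_simps)
  qed
  have first: "min r \<eta> \<le> \<epsilon> / K"
  proof (cases "r < \<eta>")
    case True then show ?thesis using ak[of r] assms by simp
  next
    case False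
    show ?thesis
    proof (rule ccontr)
      assume "\<not> min r \<eta> \<le> \<epsilon> / K"
      then have lt: "\<epsilon> / K < \<eta>" using False by simp
      define e where "e = \<epsilon> / K"
      define a where "a = (e + \<eta>) / 2"
      have e0: "0 \<le> e" using K assms unfolding e_def by simp
      have lt': "e < \<eta>" using lt unfolding e_def .
      have a1: "0 \<le> a" using e0 lt' unfolding a_def by (simp add: field_simps)
      have a2: "a < \<eta>" using e0 lt' unfolding a_def by (simp add: field_simps)
      have a3: "a \<le> r" using e0 lt' False unfolding a_def by (simp add: field_simps)
      have a4: "\<epsilon> / K < a" using e0 lt' unfolding a_def e_def[symmetric] by (simp add: field_simps)
      note a1 a2 a3 a4
      then show False using ak[of a] by simp
    qed
  qed
  have second: "\<eta> \<le> \<epsilon> / K" if "\<epsilon> < D * root_q (real m) q * r ^ L"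
  proof -
    have "r ^ L = r * r ^ (L - 1)" using assms(2) by (metis Suc_diff_1 less_le_trans zero_less_one power_Suc)
    then have "\<epsilon> < K * r" using that unfolding K_def by (simp add: ac_simps)
    then have "\<epsilon> / K < r" using K by (simp add: field_simps)
    then show ?thesis using first by linarith
  qed
  show ?thesis using first second unfolding K_def m_def by blast
qed

end
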